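(* Let $T, N, s, \delta$ be positive integers and $\beta$ a nonnegative integer. Let $x_1,\dots,x_T$ be nonnegative integers, where $x_t$ is the number of shifts starting at time step $t$, every shift started at time $t$ occupying the time steps $t, t+1, \dots, t+\delta-1$. Set $x_\tau := 0$ for $\tau \le 0$ and, for $t\in\{1,\dots,T\}$, define $$z_t := \sum_{\tau=t-\delta-\beta+1}^{t} x_\tau .$$ Suppose that $$\sum_{t=1}^T x_t = sN \qquad\text{and}\qquad z_t \le N \ \text{ for all } t\in\{1,\dots,T\}.$$ Then the $sN$ shifts can be assigned to $N$ drivers such that each driver works exactly $s$ shifts (each of $\delta$ time steps), and each driver has a break of at least $\beta$ time steps between any two consecutive shifts assigned to that driver; i.e., if a driver is assigned shifts starting at times $t_1 < t_2$, then $t_2 \ge t_1 + \delta + \beta$.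
   Context: Time is discretized into steps $1,\dots,T$. A shift starting at time $t$ is active during time steps $t,\dots,t+\delta-1$. The "extended shift" of a shift starting at $t_1$ is the interval $[t_1, t_1+\delta+\beta)$, i.e. the shift together with the mandatory break of $\beta$ time steps after it; a driver has adequate breaks exactly when the extended shifts assigned to that driver are pairwise disjoint. *)

theory Defs
  imports Main
begin

text \<open>Number of shifts whose extended shift (shift plus break) covers time t:
  z_t = sum of x_tau for tau from t-delta-beta+1 to t, with x_tau = 0 for tau <= 0.\<close>
definition zval :: "(nat \<Rightarrow> nat) \<Rightarrow> nat \<Rightarrow> nat \<Rightarrow> nat \<Rightarrow> nat" where
  "zval x \<delta> \<beta> t = (\<Sum>\<tau> \<in> {\<tau>. 1 \<le> \<tau> \<and> \<tau> \<le> t \<and> t < \<tau> + \<delta> + \<beta>}. x \<tau>)"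

text \<open>The set of individual shifts: shift (t,k) is the k-th shift starting at time t.\<close>
definition shifts :: "nat \<Rightarrow> (nat \<Rightarrow> nat) \<Rightarrow> (nat \<times> nat) set" where
  "shifts T x = {(t, k). 1 \<le> t \<and> t \<le> T \<and> k < x t}"

end

theory Submission
  imports Defs
begin

definition pre :: "(nat \<Rightarrow> nat) \<Rightarrow> nat \<Rightarrow> nat" where
  "pre x t = (\<Sum>\<tau>\<in>{1..<t}. x \<tau>)"

lemma pre_Suc: "1 \<le> t \<Longrightarrow> pre x (Suc t) = pre x t + x t"
  unfolding pre_def by (simp add: sum.atLeastLessThan_Suc)

lemma pre_mono: "a \<le> b \<Longrightarrow> pre x a \<le> pre x b"
  unfolding pre_def by (rule sum_mono2) auto

lemma pre_diff: "1 \<le> a \<Longrightarrow> a \<le> Suc b \<Longrightarrow> pre x (Suc b) = pre x a + (\<Sum>\<tau>\<in>{a..b}. x \<tau>)"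
proof -
  assume h: "1 \<le> a" "a \<le> Suc b"
  have "{a..b} = {a..<Suc b}" by auto
  then show ?thesis unfolding pre_def using sum.atLeastLessThan_concat[of 1 a "Suc b" x] h by simp
qed

lemma card_mod: assumes "i < (N::nat)" shows "card {j. j < s * N \<and> j mod N = i} = s"
proof -
  have "{j. j < s * N \<and> j mod N = i} = (\<lambda>m. i + N * m) ` {..<s}"
  proof (intro set_eqI iffI)
    fix j assume "j \<in> {j. j < s * N \<and> j mod N = i}"
    then have j: "j < s * N" "j mod N = i" by auto
    have "j = i + N * (j div N)" using j(2) by (metis mod_mult_div_eq add.commute)
    moreover have "j div N < s" using j(1) assms by (simp add: div_less_iff_less_mult mult.commute)
    ultimately show "j \<in> (\<lambda>m. i + N * m) ` {..<s}" by blast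
  next
    fix j assume "j \<in> (\<lambda>m. i + N * m) ` {..<s}"
    then obtain m where m: "m < s" "j = i + N * m" by auto
    have "i + N * m < N + N * m" using assms by simp
    also have "\<dots> \<le> s * N" using m(1)
      by (metis add.commute mult.commute mult_Suc mult_le_mono1 Suc_leI)
    finally show "j \<in> {j. j < s * N \<and> j mod N = i}" using m assms by simp
  qed
  moreover have "inj_on (\<lambda>m. i + N * m) {..<s}" using assms by (intro inj_onI) simp
  ultimately show ?thesis by (simp add: card_image)
qed

theorem lemma1:
  fixes T N s \<delta> \<beta> :: nat and x :: "nat \<Rightarrow> nat"
  assumes "T > 0" "N > 0" "s > 0" "\<delta> > 0"
    and "(\<Sum>t = 1..T. x t) = s * N"
    and "\<forall>t \<in> {1..T}. zval x \<delta> \<beta> t \<le> N"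
  shows "\<exists>d :: nat \<times> nat \<Rightarrow> nat.
           (\<forall>p \<in> shifts T x. d p < N) \<and>
           (\<forall>i < N. card {p \<in> shifts T x. d p = i} = s) \<and>
           (\<forall>p \<in> shifts T x. \<forall>q \<in> shifts T x.
              p \<noteq> q \<and> d p = d q \<and> fst p \<le> fst q \<longrightarrow> fst p + \<delta> + \<beta> \<le> fst q)"
proof -
  define idx where "idx = (\<lambda>(t, k). pre x t + k)"
  let ?S = "shifts T x"
  have S_eq: "?S = Sigma {1..T} (\<lambda>t. {..<x t})" unfolding shifts_def by auto
  have finS: "finite ?S" unfolding S_eq by auto
  have cardS: "card ?S = s * N" unfolding S_eq using assms(5) by (simp add: card_SigmaI)
  have preT: "pre x (Suc T) = s * N" using pre_diff[of 1 T x] assms(1,5) by (simp add: pre_def)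
  have bnd: "pre x t \<le> idx (t, k) \<and> idx (t, k) < pre x (Suc t)" if "(t, k) \<in> ?S" for t k
    using that pre_Suc[of t x] unfolding idx_def shifts_def by auto
  have inj: "inj_on idx ?S"
  proof (rule inj_onI)
    fix p q assume p: "p \<in> ?S" and q: "q \<in> ?S" and e: "idx p = idx q"
    obtain t1 k1 where p': "p = (t1, k1)" by (cases p)
    obtain t2 k2 where q': "q = (t2, k2)" by (cases q)
    have b1: "pre x t1 \<le> idx p \<and> idx p < pre x (Suc t1)" using bnd p p' by auto
    have b2: "pre x t2 \<le> idx q \<and> idx q < pre x (Suc t2)" using bnd q q' by auto
    have "\<not> t1 < t2" using b1 b2 e pre_mono[of "Suc t1" t2 x] by auto
    moreover have "\<not> t2 < t1" using b1 b2 e pre_mono[of "Suc t2" t1 x] by auto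
    ultimately have "t1 = t2" by simp
    then show "p = q" using e p' q' unfolding idx_def by simp
  qed
  have img: "idx ` ?S = {..<s * N}"
  proof (rule card_subset_eq)
    show "idx ` ?S \<subseteq> {..<s * N}"
    proof
      fix j assume "j \<in> idx ` ?S"
      then obtain t k where tk: "(t, k) \<in> ?S" "j = idx (t, k)" by auto
      have "t \<le> T" using tk unfolding shifts_def by auto
      then have "pre x (Suc t) \<le> pre x (Suc T)" by (intro pre_mono) simp
      then show "j \<in> {..<s * N}" using bnd[OF tk(1)] tk(2) preT by auto
    qed
    show "card (idx ` ?S) = card {..<s * N}" using card_image[OF inj] cardS by simp
  qed auto
  define d where "d = (\<lambda>p. idx p mod N)"
  show ?thesis
  proof (intro exI[of _ d] conjI ballI allI impI)
    fix p assume "p \<in> ?S" then show "d p < N" unfolding d_def using assms(2) by simp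
  next
    fix i assume i: "i < N"
    have "card {p \<in> ?S. d p = i} = card (idx ` {p \<in> ?S. d p = i})"
      using inj by (intro card_image[symmetric]) (auto intro: inj_on_subset)
    also have "idx ` {p \<in> ?S. d p = i} = {j. j < s * N \<and> j mod N = i}"
      using img unfolding d_def by auto
    finally show "card {p \<in> ?S. d p = i} = s" using card_mod[OF i] by simp
  next
    fix p q assume p: "p \<in> ?S" and q: "q \<in> ?S" and h: "p \<noteq> q \<and> d p = d q \<and> fst p \<le> fst q"
    obtain t1 k1 where p': "p = (t1, k1)" by (cases p)
    obtain t2 k2 where q': "q = (t2, k2)" by (cases q)
    show "fst p + \<delta> + \<beta> \<le> fst q"
    proof (rule ccontr)
      assume "\<not> fst p + \<delta> + \<beta> \<le> fst q"
      then have lt: "t2 < t1 + \<delta> + \<beta>" using p' q' by simp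
      have t12: "t1 \<le> t2" using h p' q' by simp
      have t1: "1 \<le> t1" and t2: "t2 \<le> T" using p p' q q' unfolding shifts_def by auto
      have "(\<Sum>\<tau>\<in>{t1..t2}. x \<tau>) \<le> zval x \<delta> \<beta> t2"
        unfolding zval_def by (rule sum_mono2) (use t1 lt in auto)
      also have "\<dots> \<le> N" using assms(6) t1 t12 t2 by auto
      finally have sN: "(\<Sum>\<tau>\<in>{t1..t2}. x \<tau>) \<le> N" .
      have pd: "pre x (Suc t2) = pre x t1 + (\<Sum>\<tau>\<in>{t1..t2}. x \<tau>)"
        using pre_diff[of t1 t2 x] t1 t12 by simp
      have b1: "pre x t1 \<le> idx p" using bnd p p' by auto
      have b2: "idx q < pre x (Suc t2)" using bnd q q' by auto
      have b1': "idx p < pre x (Suc t2)" using bnd p p' pre_mono[of "Suc t1" "Suc t2" x] t12 by fastforce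
      have b2': "pre x t1 \<le> idx q" using bnd q q' pre_mono[of t1 t2 x] t12 by fastforce
      have ne: "idx p \<noteq> idx q" using inj p q h by (meson inj_on_def)
      have md: "idx p mod N = idx q mod N" using h unfolding d_def by simp
      have "idx p < idx q + N" "idx q < idx p + N" using b1 b2 b1' b2' pd sN by linarith+
      then show False using md ne
      proof (cases "idx p < idx q")
        case True
        then have "N dvd idx q - idx p" using md mod_eq_dvd_iff_nat[of "idx p" "idx q" N] by simp
        then have "N \<le> idx q - idx p" using True by (simp add: dvd_imp_le)
        then show False using \<open>idx q < idx p + N\<close> True by linarith
      next
        case False
        then have lt2: "idx q < idx p" using ne by linarith
        then have "N dvd idx p - idx q" using md mod_eq_dvd_iff_nat[of "idx q" "idx p" N] by simp
        then have "N \<le> idx p - idx q" using lt2 by (simp add: dvd_imp_le)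
        then show False using \<open>idx p < idx q + N\<close> lt2 by linarith
      qed
    qed
  qed
qed

end
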